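(* Let $n>3$ and let $G_n$ be the directed graph with nodes $0,\dots,n-1$ and arcs $i\to i+1$ for $0\le i\le n-2$, $j\to 0$ for $1\le j\le n-1$, and $0\to n-1$. Let $\pi\in S_n$ and $\rho=\pi^{-1}$. The following are equivalent: (1) $\rho(0)<\rho(n-1)<\rho(1)$ or $\rho(1)<\rho(n-1)<\rho(0)$; (2) there is no $\mathbf y\in\mathbb{R}^{n-1}$ with $(\Xi R_\pi C_{G_n})^T\mathbf y=\mathbf 0$, $\mathbf y\ge\mathbf 0$ and $\mathbf y\ne\mathbf 0$.
   Context: $d_G(x,y)$ is the shortest directed path length from $x$ to $y$ ($\infty$ if none). The distance-count matrix $C_G\in\mathbb{R}^{n\times n}$ has $(C_G)_{i,k}=|\{j: d_G(j,i)=k\}|$ (indices from 0). $R_\pi$ is the $n\times n$ 0/1 matrix with $(R_\pi)_{ij}=1$ iff $\pi(i)=j$. $\Xi\in\mathbb{R}^{(n-1)\times n}$ has $\Xi_{i,i}=-1$, $\Xi_{i,i+1}=1$ for $0\le i\le n-2$, and all other entries $0$. Vector inequalities are entrywise. *)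

theory Defs
  imports "Jordan_Normal_Form.Matrix" "HOL-Library.Extended_Nat" "HOL-Combinatorics.Permutations"
begin

definition Gn_arcs :: "nat \<Rightarrow> (nat \<times> nat) set" where
  "Gn_arcs n = {(i, i+1) | i. i + 2 \<le> n} \<union> {(j, 0) | j. 1 \<le> j \<and> j \<le> n - 1} \<union> {(0, n - 1)}"

definition dist_G :: "(nat \<times> nat) set \<Rightarrow> nat \<Rightarrow> nat \<Rightarrow> enat" where
  "dist_G E x y = (if \<exists>k. (x, y) \<in> E ^^ k then enat (LEAST k. (x, y) \<in> E ^^ k) else \<infinity>)"

definition dist_count_mat :: "nat \<Rightarrow> (nat \<times> nat) set \<Rightarrow> real mat" where
  "dist_count_mat n E = mat n n (\<lambda>(i, k). real (card {j. j < n \<and> dist_G E j i = enat k}))"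

definition perm_mat :: "nat \<Rightarrow> (nat \<Rightarrow> nat) \<Rightarrow> real mat" where
  "perm_mat n \<pi> = mat n n (\<lambda>(i, j). if \<pi> i = j then 1 else 0)"

definition Xi_mat :: "nat \<Rightarrow> real mat" where
  "Xi_mat n = mat (n - 1) n (\<lambda>(i, j). if j = i then -1 else if j = i + 1 then 1 else 0)"

end

theory Submission
  imports Defs
begin



definition Dd :: "nat \<Rightarrow> nat \<Rightarrow> nat \<Rightarrow> nat" where
  "Dd n j i = (if i = 0 then (if j = 0 then 0 else 1)
     else if i = n - 1 then (if j = n - 1 then 0 else if j = 0 \<or> j = n - 2 then 1 else 2)
     else if j \<le> i then i - j else i + 1)"

lemma arcs_lt: "(m, i) \<in> Gn_arcs n \<Longrightarrow> n > 3 \<Longrightarrow> m < n \<and> i < n"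
  unfolding Gn_arcs_def by auto

lemma arc_tri:
  assumes "n > 3" "(m, i) \<in> Gn_arcs n" "j < n"
  shows "Dd n j i \<le> Dd n j m + 1"
  using assms unfolding Gn_arcs_def Dd_def by auto

lemma dist_lower:
  assumes "n > 3" "(j, i) \<in> Gn_arcs n ^^ k" "j < n"
  shows "Dd n j i \<le> k"
  using assms(2)
proof (induction k arbitrary: i)
  case 0
  then show ?case by (auto simp: Dd_def)
next
  case (Suc k)
  then obtain m where m: "(j, m) \<in> Gn_arcs n ^^ k" "(m, i) \<in> Gn_arcs n"
    by (auto elim: relpow_Suc_E)
  have "Dd n j i \<le> Dd n j m + 1" using arc_tri[OF assms(1) m(2) assms(3)] .
  with Suc.IH[OF m(1)] show ?case by simp
qed

lemma chain:
  assumes "n > 3" "j + d < n"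
  shows "(j, j + d) \<in> Gn_arcs n ^^ d"
  using assms(2)
proof (induction d)
  case 0
  then show ?case by (simp add: relpow_0_I)
next
  case (Suc d)
  have "(j + d, j + Suc d) \<in> Gn_arcs n" using Suc.prems unfolding Gn_arcs_def by auto
  with Suc show ?case by (auto intro: relpow_Suc_I)
qed

lemma dist_upper:
  assumes "n > 3" "j < n" "i < n"
  shows "(j, i) \<in> Gn_arcs n ^^ (Dd n j i)"
proof -
  let ?E = "Gn_arcs n"
  have a0: "(j', 0) \<in> ?E" if "1 \<le> j'" "j' < n" for j' using that unfolding Gn_arcs_def by auto
  have an: "(0, n - 1) \<in> ?E" unfolding Gn_arcs_def by auto
  have an2: "(n - 2, n - 1) \<in> ?E" using assms unfolding Gn_arcs_def by auto
  show ?thesis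
  proof (cases "i = 0")
    case True
    then show ?thesis using a0[of j] assms by (auto simp: Dd_def relpow_0_I)
  next
    case i0: False
    show ?thesis
    proof (cases "i = n - 1")
      case True
      have "j = n - 1 \<or> j = 0 \<or> j = n - 2 \<or> (j \<noteq> n - 1 \<and> j \<noteq> 0 \<and> j \<noteq> n - 2)" by blast
      moreover have "(j, n - 1) \<in> ?E ^^ 2" if "j \<noteq> n - 1" "j \<noteq> 0"
        using a0[of j] an that assms by (auto simp: numeral_2_eq_2 intro: relpow_Suc_I)
      ultimately show ?thesis using True assms an an2 i0 by (auto simp: Dd_def relpow_0_I)
    next
      case False
      show ?thesis
      proof (cases "j \<le> i")
        case True
        then show ?thesis using chain[OF assms(1), of j "i - j"] assms i0 False
          by (auto simp: Dd_def)
      next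
        case jg: False
        have "(0, i) \<in> ?E ^^ i" using chain[OF assms(1), of 0 i] assms by simp
        moreover have "(j, 0) \<in> ?E" using a0[of j] jg assms by auto
        ultimately have "(j, i) \<in> ?E ^^ Suc i" by (blast intro: relpow_Suc_I2)
        then show ?thesis using jg i0 False by (auto simp: Dd_def)
      qed
    qed
  qed
qed

lemma dist_eq:
  assumes "n > 3" "j < n" "i < n"
  shows "dist_G (Gn_arcs n) j i = enat (Dd n j i)"
proof -
  have "(LEAST k. (j, i) \<in> Gn_arcs n ^^ k) = Dd n j i"
    by (rule Least_equality) (use dist_upper[OF assms] dist_lower[OF assms(1) _ assms(2)] in auto)
  then show ?thesis using dist_upper[OF assms] unfolding dist_G_def by auto
qed


definition Cn :: "nat \<Rightarrow> nat \<Rightarrow> nat \<Rightarrow> nat" where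
  "Cn n i k = (if i = 0 then (if k = 0 then 1 else if k = 1 then n - 1 else 0)
     else if i = n - 1 then (if k = 0 then 1 else if k = 1 then 2 else if k = 2 then n - 3 else 0)
     else if k \<le> i then 1 else if k = i + 1 then n - 1 - i else 0)"

lemma card_D:
  assumes "n > 3" "i < n"
  shows "card {j. j < n \<and> Dd n j i = k} = Cn n i k"
proof (cases "i = 0")
  case True
  show ?thesis
  proof -
    consider "k = 0" | "k = 1" | "k > 1" by linarith
    then show ?thesis
    proof cases
      case 1
      have "{j. j < n \<and> Dd n j i = k} = {0}" using 1 True assms by (auto simp: Dd_def)
      then show ?thesis using 1 True by (simp add: Cn_def)
    next
      case 2
      have "{j. j < n \<and> Dd n j i = k} = {1..<n}" using 2 True assms by (auto simp: Dd_def)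
      then show ?thesis using 2 True by (simp add: Cn_def)
    next
      case 3
      have "{j. j < n \<and> Dd n j i = k} = {}" using 3 True assms by (auto simp: Dd_def)
      then show ?thesis using 3 True by (simp add: Cn_def)
    qed
  qed
next
  case i0: False
  show ?thesis
  proof (cases "i = n - 1")
    case True
    consider "k = 0" | "k = 1" | "k = 2" | "k > 2" by linarith
    then show ?thesis
    proof cases
      case 1
      have "{j. j < n \<and> Dd n j i = k} = {n - 1}" using 1 True assms by (auto simp: Dd_def)
      then show ?thesis using 1 True i0 by (simp add: Cn_def)
    next
      case 2
      have "{j. j < n \<and> Dd n j i = k} = {0, n - 2}" using 2 True assms by (auto simp: Dd_def)
      moreover have "card {0, n - 2} = (2::nat)" using assms by simp
      ultimately show ?thesis using 2 True i0 by (simp add: Cn_def)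
    next
      case 3
      have "{j. j < n \<and> Dd n j i = k} = {1..<n - 2}" using 3 True assms by (auto simp: Dd_def)
      then show ?thesis using 3 True i0 by (simp add: Cn_def)
    next
      case 4
      have "{j. j < n \<and> Dd n j i = k} = {}" using 4 True assms by (auto simp: Dd_def)
      then show ?thesis using 4 True i0 by (simp add: Cn_def)
    qed
  next
    case False
    consider "k \<le> i" | "k = i + 1" | "k > i + 1" by linarith
    then show ?thesis
    proof cases
      case 1
      have "{j. j < n \<and> Dd n j i = k} = {i - k}" using 1 False i0 assms by (auto simp: Dd_def)
      then show ?thesis using 1 False i0 by (simp add: Cn_def)
    next
      case 2
      have "{j. j < n \<and> Dd n j i = k} = {i + 1..<n}" using 2 False i0 assms by (auto simp: Dd_def)
      then show ?thesis using 2 False i0 by (simp add: Cn_def)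
    next
      case 3
      have "{j. j < n \<and> Dd n j i = k} = {}" using 3 False i0 assms by (auto simp: Dd_def)
      then show ?thesis using 3 False i0 by (simp add: Cn_def)
    qed
  qed
qed

lemma C_entry:
  assumes "n > 3" "i < n" "k < n"
  shows "dist_count_mat n (Gn_arcs n) $$ (i, k) = real (Cn n i k)"
proof -
  have "{j. j < n \<and> dist_G (Gn_arcs n) j i = enat k} = {j. j < n \<and> Dd n j i = k}"
    using dist_eq[OF assms(1) _ assms(2)] by auto
  then show ?thesis using assms card_D[OF assms(1,2)] unfolding dist_count_mat_def by simp
qed


lemma XP_entry:
  assumes "n > 3" "a < n - 1" "b < n"
  shows "(Xi_mat n * perm_mat n p) $$ (a, b) =
    (if p (Suc a) = b then 1 else 0) - (if p a = b then 1 else 0)"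
proof -
  have "(Xi_mat n * perm_mat n p) $$ (a, b) =
    (\<Sum>l\<in>{0..<n}. (if l = a then -1 else if l = a + 1 then 1 else 0) * (if p l = b then 1 else (0::real)))"
    using assms by (simp add: Xi_mat_def perm_mat_def scalar_prod_def)
  also have "\<dots> = (\<Sum>l\<in>{0..<n}. (if l = Suc a then (if p (Suc a) = b then 1 else 0) else 0)
       - (if l = a then (if p a = b then 1 else (0::real)) else 0))"
    by (rule sum.cong) auto
  also have "\<dots> = (if Suc a \<in> {0..<n} then (if p (Suc a) = b then 1 else 0) else 0)
       - (if a \<in> {0..<n} then (if p a = b then 1 else (0::real)) else 0)"
    by (simp add: sum_subtractf)
  also have "\<dots> = (if p (Suc a) = b then 1 else 0) - (if p a = b then 1 else 0)"
  proof -
    have "Suc a < n" "a < n" using assms by auto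
    then show ?thesis by simp
  qed
  finally show ?thesis .
qed

lemma M_entry:
  assumes "n > 3" "p permutes {..<n}" "a < n - 1" "k < n"
  shows "(Xi_mat n * perm_mat n p * dist_count_mat n (Gn_arcs n)) $$ (a, k) =
    real (Cn n (p (Suc a)) k) - real (Cn n (p a) k)"
proof -
  have pa: "p a < n" "p (Suc a) < n" using assms permutes_in_image[OF assms(2)] by auto
  have "(Xi_mat n * perm_mat n p * dist_count_mat n (Gn_arcs n)) $$ (a, k) =
     (\<Sum>b\<in>{0..<n}. (Xi_mat n * perm_mat n p) $$ (a, b) * dist_count_mat n (Gn_arcs n) $$ (b, k))"
    using assms by (simp add: Xi_mat_def perm_mat_def dist_count_mat_def scalar_prod_def)
  also have "\<dots> = (\<Sum>b\<in>{0..<n}. (if p (Suc a) = b then real (Cn n (p (Suc a)) k) else 0)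
      - (if p a = b then real (Cn n (p a) k) else 0))"
    by (rule sum.cong) (use assms in \<open>auto simp: XP_entry C_entry\<close>)
  also have "\<dots> = real (Cn n (p (Suc a)) k) - real (Cn n (p a) k)"
    using pa by (simp add: sum_subtractf)
  finally show ?thesis .
qed

definition Wf :: "(nat \<Rightarrow> real) \<Rightarrow> nat \<Rightarrow> nat \<Rightarrow> real" where
  "Wf Y m b = (if 0 < b then Y (b - 1) else 0) - (if b < m then Y b else 0)"

lemma sbp: "(\<Sum>a<m. (f (Suc a) - f a) * Y a) = (\<Sum>b<Suc m. Wf Y m b * f b)"
proof (induction m)
  case 0
  then show ?case by (simp add: Wf_def)
next
  case (Suc m)
  have "(\<Sum>b<Suc m. Wf Y (Suc m) b * f b) = (\<Sum>b<Suc m. Wf Y m b * f b - (if b = m then Y m * f m else 0))"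
    by (rule sum.cong) (auto simp: Wf_def algebra_simps)
  also have "\<dots> = (\<Sum>b<Suc m. Wf Y m b * f b) - Y m * f m" by (simp add: sum_subtractf)
  finally have "(\<Sum>b<Suc m. Wf Y (Suc m) b * f b) = (\<Sum>b<Suc m. Wf Y m b * f b) - Y m * f m" .
  moreover have "Wf Y (Suc m) (Suc m) = Y m" by (simp add: Wf_def)
  ultimately show ?case using Suc.IH by (simp add: algebra_simps)
qed

lemma MTy:
  assumes "n > 3" "p permutes {..<n}" "y \<in> carrier_vec (n - 1)" "k < n"
  shows "(transpose_mat (Xi_mat n * perm_mat n p * dist_count_mat n (Gn_arcs n)) *\<^sub>v y) $ k
     = (\<Sum>v<n. Wf (\<lambda>a. y $ a) (n - 1) (inv_into UNIV p v) * real (Cn n v k))"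
proof -
  let ?M = "Xi_mat n * perm_mat n p * dist_count_mat n (Gn_arcs n)"
  have dims: "dim_row ?M = n - 1" "dim_col ?M = n"
    by (simp_all add: Xi_mat_def dist_count_mat_def)
  have "(transpose_mat ?M *\<^sub>v y) $ k = (\<Sum>a\<in>{0..<n-1}. ?M $$ (a, k) * y $ a)"
    using assms dims by (simp add: scalar_prod_def)
  also have "\<dots> = (\<Sum>a<n-1. (real (Cn n (p (Suc a)) k) - real (Cn n (p a) k)) * y $ a)"
    using assms by (auto simp: M_entry lessThan_atLeast0 intro!: sum.cong)
  also have "\<dots> = (\<Sum>b<Suc (n-1). Wf (\<lambda>a. y $ a) (n - 1) b * real (Cn n (p b) k))"
    by (rule sbp)
  also have "\<dots> = (\<Sum>b<n. Wf (\<lambda>a. y $ a) (n - 1) (inv_into UNIV p (p b)) * real (Cn n (p b) k))"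
    using assms permutes_inverses[OF assms(2)] by simp
  also have "\<dots> = (\<Sum>v<n. Wf (\<lambda>a. y $ a) (n - 1) (inv_into UNIV p v) * real (Cn n v k))"
    by (rule sum.reindex_bij_betw[where h = p and g = "\<lambda>v. Wf (\<lambda>a. y $ a) (n - 1) (inv_into UNIV p v) * real (Cn n v k)"])
       (rule permutes_imp_bij[OF assms(2)])
  finally show ?thesis .
qed

lemma char:
  assumes "n > 3" "p permutes {..<n}" "y \<in> carrier_vec (n - 1)"
  shows "(transpose_mat (Xi_mat n * perm_mat n p * dist_count_mat n (Gn_arcs n)) *\<^sub>v y = 0\<^sub>v n)
     \<longleftrightarrow> (\<forall>k<n. (\<Sum>v<n. Wf (\<lambda>a. y $ a) (n - 1) (inv_into UNIV p v) * real (Cn n v k)) = 0)"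
proof -
  let ?M = "Xi_mat n * perm_mat n p * dist_count_mat n (Gn_arcs n)"
  have "dim_vec (transpose_mat ?M *\<^sub>v y) = n"
    by (simp add: Xi_mat_def dist_count_mat_def)
  then show ?thesis using MTy[OF assms] by (auto simp: vec_eq_iff)
qed


lemma colsolve:
  assumes n3: "n > 3" and eq: "\<forall>k<n. (\<Sum>v<n. u v * real (Cn n v k)) = 0"
  shows "\<forall>v. 2 \<le> v \<and> v \<le> n - 2 \<longrightarrow> u v = 0"
    "u (n - 1) = - (real n - 2) * u 0" "u 1 = (real n - 3) * u 0"
proof -
  have mid: "u v = 0" if "2 \<le> v" "v \<le> n - 2" for v
    using that
  proof (induction "n - v" arbitrary: v rule: less_induct)
    case less
    have z: "\<forall>w. Suc v \<le> w \<and> w \<le> n - 2 \<longrightarrow> u w = 0"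
      using less by auto
    have "(\<Sum>w<n. u w * real (Cn n w (Suc v))) = (\<Sum>w<n. if w = v then real (n - Suc v) * u v else 0)"
      by (rule sum.cong) (use less.prems n3 z in \<open>auto simp: Cn_def\<close>)
    also have "\<dots> = real (n - Suc v) * u v" using less.prems n3 by simp
    finally have "real (n - Suc v) * u v = 0" using eq less.prems n3 by auto
    moreover have "real (n - Suc v) \<noteq> 0" using less.prems n3 by simp
    ultimately show ?case by simp
  qed
  then show "\<forall>v. 2 \<le> v \<and> v \<le> n - 2 \<longrightarrow> u v = 0" by blast
  have "(\<Sum>w<n. u w * real (Cn n w 0)) = (\<Sum>w<n. (if w = 0 then u 0 else 0) + (if w = 1 then u 1 else 0)
     + (if w = n - 1 then u (n - 1) else 0))"
    by (rule sum.cong) (use n3 mid in \<open>auto simp: Cn_def\<close>)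
  also have "\<dots> = u 0 + u 1 + u (n - 1)" using n3 by (simp add: sum.distrib)
  finally have c0: "u 0 + u 1 + u (n - 1) = 0" using eq n3 by auto
  have "(\<Sum>w<n. u w * real (Cn n w 1)) = (\<Sum>w<n. (if w = 0 then (real n - 1) * u 0 else 0) + (if w = 1 then u 1 else 0)
     + (if w = n - 1 then 2 * u (n - 1) else 0))"
    by (rule sum.cong) (use n3 mid in \<open>auto simp: Cn_def of_nat_diff\<close>)
  also have "\<dots> = (real n - 1) * u 0 + u 1 + 2 * u (n - 1)" using n3 by (simp add: sum.distrib)
  finally have c1: "(real n - 1) * u 0 + u 1 + 2 * u (n - 1) = 0" using eq n3 by auto
  from c0 c1 show "u (n - 1) = - (real n - 2) * u 0" by (simp add: algebra_simps)
  with c0 show "u 1 = (real n - 3) * u 0" by (simp add: algebra_simps)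
qed

definition cvec :: "nat \<Rightarrow> nat \<Rightarrow> real" where
  "cvec n v = (if v = 0 then 1 else 0) + (real n - 3) * (if v = 1 then 1 else 0)
     - (real n - 2) * (if v = n - 1 then 1 else 0)"

lemma csum:
  assumes "n > 3"
  shows "(\<Sum>v<n. cvec n v * X v) = X 0 + (real n - 3) * X 1 - (real n - 2) * X (n - 1)"
proof -
  have "(\<Sum>v<n. cvec n v * X v) = (\<Sum>v<n. (if v = 0 then X 0 else 0) + (real n - 3) * (if v = 1 then X 1 else 0)
     - (real n - 2) * (if v = n - 1 then X (n - 1) else 0))"
    by (rule sum.cong) (auto simp: cvec_def algebra_simps)
  also have "\<dots> = X 0 + (real n - 3) * X 1 - (real n - 2) * X (n - 1)"
    using assms by (simp add: sum.distrib sum_subtractf sum_distrib_left[symmetric])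
  finally show ?thesis .
qed

lemma psum:
  assumes "p permutes {..<n}"
  shows "(\<Sum>a<Suc b. cvec n (p a)) = (if inv_into UNIV p 0 \<le> b then 1 else 0)
     + (real n - 3) * (if inv_into UNIV p 1 \<le> b then 1 else 0)
     - (real n - 2) * (if inv_into UNIV p (n - 1) \<le> b then 1 else 0)"
proof -
  have iff: "p a = v \<longleftrightarrow> a = inv_into UNIV p v" for a v
    using permutes_inverses[OF assms] by metis
  have "(\<Sum>a<Suc b. cvec n (p a)) = (\<Sum>a<Suc b. (if a = inv_into UNIV p 0 then 1 else 0)
     + (real n - 3) * (if a = inv_into UNIV p 1 then 1 else 0)
     - (real n - 2) * (if a = inv_into UNIV p (n - 1) then 1 else 0))"
    by (rule sum.cong) (simp_all add: cvec_def iff)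
  also have "\<dots> = (if inv_into UNIV p 0 \<le> b then 1 else 0)
     + (real n - 3) * (if inv_into UNIV p 1 \<le> b then 1 else 0)
     - (real n - 2) * (if inv_into UNIV p (n - 1) \<le> b then 1 else 0)"
    by (simp add: sum.distrib sum_subtractf sum_distrib_left[symmetric] less_Suc_eq_le)
  finally show ?thesis .
qed

lemma W_of_psum:
  assumes "(\<Sum>a<Suc m. z a) = 0" "b < Suc m"
  shows "Wf (\<lambda>a. vec m (\<lambda>b. - (\<Sum>a<Suc b. z a)) $ a) m b = z b"
proof (cases b)
  case 0
  then show ?thesis using assms by (cases m) (auto simp: Wf_def)
next
  case (Suc c)
  show ?thesis
  proof (cases "Suc c < m")
    case True
    then show ?thesis using Suc by (simp add: Wf_def)
  next
    case False
    then have m: "m = Suc c" using Suc assms by simp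
    have h: "(\<Sum>a<Suc c. z a) + z (Suc c) = 0" using assms(1) unfolding m by simp
    show ?thesis using Suc h unfolding m by (simp add: Wf_def)
  qed
qed

lemma psum_W: "b < m \<Longrightarrow> (\<Sum>a<Suc b. Wf Y m a) = - Y b"
  by (induction b) (auto simp: Wf_def)


theorem theorem7:
  fixes n :: nat and p :: "nat \<Rightarrow> nat"
  assumes "n > 3"
    and "p permutes {..<n}"
  shows "(let r = inv_into UNIV p in
            (r 0 < r (n - 1) \<and> r (n - 1) < r 1) \<or> (r 1 < r (n - 1) \<and> r (n - 1) < r 0))
     \<longleftrightarrow>
     \<not> (\<exists>y \<in> carrier_vec (n - 1).
           transpose_mat (Xi_mat n * perm_mat n p * dist_count_mat n (Gn_arcs n)) *\<^sub>v y = 0\<^sub>v n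
         \<and> (\<forall>i < n - 1. y $ i \<ge> 0) \<and> y \<noteq> 0\<^sub>v (n - 1))"
proof -
  note n3 = assms(1) and pp = assms(2)
  define r where "r = inv_into UNIV p"
  define N where "N = real n"
  have N3: "N > 3" using n3 unfolding N_def by simp
  have pr: "p (r v) = v" for v unfolding r_def using permutes_inverses[OF pp] by metis
  have rp: "r (p a) = a" for a unfolding r_def using permutes_inverses[OF pp] by metis
  have rperm: "r permutes {..<n}" unfolding r_def using permutes_inv[OF pp] by simp
  have rlt: "r v < n" if "v < n" for v using permutes_in_image[OF rperm] that by simp
  have plt: "p a < n" if "a < n" for a using permutes_in_image[OF pp] that by simp
  have rinj: "r x = r y \<Longrightarrow> x = y" for x y using pr by metis
  have d01: "r 0 \<noteq> r 1" "r 0 \<noteq> r (n - 1)" "r 1 \<noteq> r (n - 1)"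
  proof -
    have "(0::nat) \<noteq> 1" "(0::nat) \<noteq> n - 1" "(1::nat) \<noteq> n - 1" using n3 by auto
    then show "r 0 \<noteq> r 1" "r 0 \<noteq> r (n - 1)" "r 1 \<noteq> r (n - 1)" using rinj by metis+
  qed
  have lt3: "r 0 < n" "r 1 < n" "r (n - 1) < n" using rlt n3 by auto
  have Ssum: "(\<Sum>a<Suc b. t * cvec n (p a)) = t * ((if r 0 \<le> b then 1 else 0)
     + (N - 3) * (if r 1 \<le> b then 1 else 0) - (N - 2) * (if r (n - 1) \<le> b then 1 else 0))" for t b
    using psum[OF pp, of b] unfolding r_def N_def by (simp add: sum_distrib_left[symmetric])
  let ?M = "Xi_mat n * perm_mat n p * dist_count_mat n (Gn_arcs n)"
  let ?btw = "(r 0 < r (n - 1) \<and> r (n - 1) < r 1) \<or> (r 1 < r (n - 1) \<and> r (n - 1) < r 0)"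
  let ?ex = "\<exists>y \<in> carrier_vec (n - 1). transpose_mat ?M *\<^sub>v y = 0\<^sub>v n
         \<and> (\<forall>i < n - 1. y $ i \<ge> 0) \<and> y \<noteq> 0\<^sub>v (n - 1)"
  have "?btw \<longleftrightarrow> \<not> ?ex"
  proof
    assume btw: ?btw
    show "\<not> ?ex"
    proof
      assume ?ex
      then obtain y where yc: "y \<in> carrier_vec (n - 1)" and eq: "transpose_mat ?M *\<^sub>v y = 0\<^sub>v n"
        and nn: "\<forall>i < n - 1. y $ i \<ge> 0" and ne: "y \<noteq> 0\<^sub>v (n - 1)" by blast
      define u where "u v = Wf (\<lambda>a. y $ a) (n - 1) (r v)" for v
      have cols: "\<forall>k<n. (\<Sum>v<n. u v * real (Cn n v k)) = 0"
        using char[OF n3 pp yc] eq unfolding u_def r_def by blast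
      note cs = colsolve[OF n3 cols]
      have uc: "u v = u 0 * cvec n v" if v: "v < n" for v
      proof -
        have "v = 0 \<or> v = 1 \<or> v = n - 1 \<or> (2 \<le> v \<and> v \<le> n - 2)" using v n3 by arith
        then consider "v = 0" | "v = 1" | "v = n - 1" | "2 \<le> v \<and> v \<le> n - 2" by blast
        then show ?thesis
        proof cases
          case 1 then show ?thesis using n3 by (simp add: cvec_def)
        next
          case 2 then show ?thesis using cs(3) n3 by (simp add: cvec_def)
        next
          case 3 then show ?thesis using cs(2) n3 by (simp add: cvec_def)
        next
          case 4 then show ?thesis using cs(1) n3 by (auto simp: cvec_def)
        qed
      qed
      have Wpa: "Wf (\<lambda>a. y $ a) (n - 1) a = u 0 * cvec n (p a)" if "a < n" for a
        using uc[OF plt[OF that]] unfolding u_def rp .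
      have yb: "y $ b = - (u 0 * ((if r 0 \<le> b then 1 else 0)
          + (N - 3) * (if r 1 \<le> b then 1 else 0) - (N - 2) * (if r (n - 1) \<le> b then 1 else 0)))"
        if "b < n - 1" for b
      proof -
        have "y $ b = - (\<Sum>a<Suc b. Wf (\<lambda>a. y $ a) (n - 1) a)" using psum_W[OF that] by simp
        also have "\<dots> = - (\<Sum>a<Suc b. u 0 * cvec n (p a))"
        proof (rule arg_cong[where f = uminus], rule sum.cong)
          fix x assume "x \<in> {..<Suc b}"
          then have "x < n" using that by auto
          then show "Wf (\<lambda>a. y $ a) (n - 1) x = u 0 * cvec n (p x)" by (rule Wpa)
        qed simp
        finally show ?thesis by (simp only: Ssum)
      qed
      have u0: "u 0 = 0"
      proof (cases "r 0 < r (n - 1) \<and> r (n - 1) < r 1")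
        case True
        have a: "r 0 < n - 1" "r (n - 1) < n - 1" using True lt3 by auto
        have e1: "y $ r 0 = - u 0" using yb[OF a(1)] True by simp
        have e2: "y $ r (n - 1) = u 0 * (N - 3)" using yb[OF a(2)] True by (simp add: algebra_simps)
        have "0 \<le> y $ r 0" using nn a(1) by blast
        then have h1: "u 0 \<le> 0" using e1 by linarith
        have "0 \<le> y $ r (n - 1)" using nn a(2) by blast
        then have "0 \<le> u 0 * (N - 3)" using e2 by simp
        then have "0 \<le> u 0" using N3 by (simp add: zero_le_mult_iff)
        then show ?thesis using h1 by linarith
      next
        case False
        with btw have T: "r 1 < r (n - 1) \<and> r (n - 1) < r 0" by blast
        have a: "r 1 < n - 1" "r (n - 1) < n - 1" using T lt3 by auto
        have e1: "y $ r 1 = - (u 0 * (N - 3))" using yb[OF a(1)] T by simp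
        have e2: "y $ r (n - 1) = u 0" using yb[OF a(2)] T by (simp add: algebra_simps)
        have "0 \<le> y $ r (n - 1)" using nn a(2) by blast
        then have h1: "0 \<le> u 0" using e2 by linarith
        have "0 \<le> y $ r 1" using nn a(1) by blast
        then have "0 \<le> (- u 0) * (N - 3)" using e1 by simp
        then have "0 \<le> - u 0" using N3 by (simp add: zero_le_mult_iff mult_le_0_iff)
        then show ?thesis using h1 by linarith
      qed
      have "y = 0\<^sub>v (n - 1)"
        using yc yb u0 by (intro eq_vecI) auto
      with ne show False by blast
    qed
  next
    assume nb: "\<not> ?ex"
    show ?btw
    proof (rule ccontr)
      assume nbtw: "\<not> ?btw"
      define t :: real where "t = (if r (n - 1) < r 0 then 1 else -1)"
      define u where "u v = t * cvec n v" for v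
      define Y where "Y b = - (\<Sum>a<Suc b. u (p a))" for b
      define y where "y = vec (n - 1) Y"
      have yc: "y \<in> carrier_vec (n - 1)" unfolding y_def by simp
      have usum: "(\<Sum>v<n. u v * X v) = t * (X 0 + (N - 3) * X 1 - (N - 2) * X (n - 1))" for X
        using csum[OF n3, of X] unfolding u_def N_def by (simp add: sum_distrib_left[symmetric] mult.assoc)
      have "(\<Sum>a<n. u (p a)) = (\<Sum>v<n. u v)"
        by (rule sum.reindex_bij_betw[where h = p and g = u]) (rule permutes_imp_bij[OF pp])
      also have "\<dots> = 0" using usum[of "\<lambda>_. 1"] by (simp add: algebra_simps)
      finally have zs: "(\<Sum>a<Suc (n - 1). u (p a)) = 0" using n3 by simp
      have Wy: "Wf (\<lambda>a. y $ a) (n - 1) b = u (p b)" if "b < n" for b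
        using W_of_psum[where z = "\<lambda>a. u (p a)", OF zs] that n3 unfolding y_def Y_def by simp
      have "transpose_mat ?M *\<^sub>v y = 0\<^sub>v n"
        unfolding char[OF n3 pp yc]
      proof (intro allI impI)
        fix k assume k: "k < n"
        have "(\<Sum>v<n. Wf (\<lambda>a. y $ a) (n - 1) (inv_into UNIV p v) * real (Cn n v k))
            = (\<Sum>v<n. u v * real (Cn n v k))"
          using Wy rlt pr unfolding r_def by (auto intro!: sum.cong)
        also have "\<dots> = 0"
        proof -
          have c0: "Cn n 0 k = (if k = 0 then 1 else if k = 1 then n - 1 else 0)" by (simp add: Cn_def)
          have c1: "Cn n 1 k = (if k \<le> 1 then 1 else if k = 2 then n - 2 else 0)" 
          proof -
            have h: "(1::nat) \<noteq> n - 1" using n3 by auto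
            show ?thesis using h by (simp add: Cn_def numeral_2_eq_2)
          qed
          have c2: "Cn n (n - 1) k = (if k = 0 then 1 else if k = 1 then 2 else if k = 2 then n - 3 else 0)"
            using n3 by (simp add: Cn_def)
          have e: "real (n - 1) = N - 1" "real (n - 2) = N - 2" "real (n - 3) = N - 3" "real (n - Suc 0) = N - 1"
            using n3 unfolding N_def by (simp_all add: of_nat_diff)
          have "k = 0 \<or> k = 1 \<or> k = 2 \<or> k > 2" by arith
          then show ?thesis unfolding usum c0 c1 c2 by (elim disjE) (simp_all add: e algebra_simps)
        qed
        finally show "(\<Sum>v<n. Wf (\<lambda>a. y $ a) (n - 1) (inv_into UNIV p v) * real (Cn n v k)) = 0" .
      qed
      moreover have yb: "y $ b = - (t * ((if r 0 \<le> b then 1 else 0)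
          + (N - 3) * (if r 1 \<le> b then 1 else 0) - (N - 2) * (if r (n - 1) \<le> b then 1 else 0)))"
        if "b < n - 1" for b
        using that Ssum[of t b] unfolding y_def Y_def u_def by (simp del: sum.lessThan_Suc)
      have ord: "(r (n - 1) < r 0 \<and> r (n - 1) < r 1) \<or> (r 0 < r (n - 1) \<and> r 1 < r (n - 1))"
        using nbtw d01 by linarith
      moreover have "\<forall>i < n - 1. y $ i \<ge> 0"
      proof (intro allI impI)
        fix b assume b: "b < n - 1"
        show "y $ b \<ge> 0"
        proof (cases "r (n - 1) < r 0")
          case True
          with ord have o: "r (n - 1) < r 1" by auto
          show ?thesis unfolding yb[OF b] t_def using True o N3
            by (cases "r 0 \<le> b"; cases "r 1 \<le> b"; cases "r (n - 1) \<le> b") simp_all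
        next
          case False
          with ord have o: "r 0 < r (n - 1)" "r 1 < r (n - 1)" by auto
          show ?thesis unfolding yb[OF b] t_def using False o N3
            by (cases "r 0 \<le> b"; cases "r 1 \<le> b"; cases "r (n - 1) \<le> b") simp_all
        qed
      qed
      moreover have "y \<noteq> 0\<^sub>v (n - 1)"
      proof
        assume y0: "y = 0\<^sub>v (n - 1)"
        show False
        proof (cases "r (n - 1) < r 0")
          case True
          with ord have "r (n - 1) < n - 1" using lt3 by auto
          then have "y $ r (n - 1) = 0" using y0 by simp
          moreover have "\<not> r 0 \<le> r (n - 1)" "\<not> r 1 \<le> r (n - 1)" using True ord by auto
          ultimately show False using yb[OF \<open>r (n - 1) < n - 1\<close>] True N3 unfolding t_def by simp
        next
          case False
          with ord have "r 0 < n - 1" using lt3 by auto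
          then have "y $ r 0 = 0" using y0 by simp
          moreover have "\<not> r (n - 1) \<le> r 0" using False ord by auto
          ultimately show False using yb[OF \<open>r 0 < n - 1\<close>] False N3 unfolding t_def
            by (cases "r 1 \<le> r 0") simp_all
        qed
      qed
      ultimately have ?ex using yc by blast
      with nb show False by blast
    qed
  qed
  then show ?thesis unfolding r_def Let_def by simp
qed

end
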